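(* Suppose that $K$ is algebraically closed of characteristic $0$ and its residue class field $k$ has characteristic $p>0$. Then for each $m\in\mathbb{N}$ there exist $x_1,\dots,x_m\in K^\vee$ such that $\{\pi(x_1),\dots,\pi(x_m)\}$ is an orthogonal subset of $K^\vee/K$, where $\pi:K^\vee\to K^\vee/K$ is the canonical quotient map.
   Context: $K$ is a complete non-archimedean non-trivially valued field which is not spherically complete; $K^\vee$ is a fixed spherically complete valued field which is an immediate extension of $K$, regarded as a $K$-normed space with its absolute value. $K^\vee/K$ carries the quotient norm $\|\pi(z)\|=\inf_{a\in K}|z-a|$. A subset $S$ not containing $0$ is orthogonal if $\|\sum_i\lambda_is_i\|=\max_i\|\lambda_is_i\|$ for all finitely many distinct $s_i\in S$ and $\lambda_i\in K$. *)

theory Defs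
  imports Complex_Main "HOL-Computational_Algebra.Polynomial"
begin

text \<open>The spherically complete field K^v is modelled as a type 'L (class field) with an
absolute value v; the field K is a subset of 'L which is a subfield.  The absolute
value of K is the restriction of v.\<close>

definition nonarch_abs :: "('L::field \<Rightarrow> real) \<Rightarrow> bool" where
  "nonarch_abs v \<longleftrightarrow>
     (\<forall>x. v x \<ge> 0) \<and> (\<forall>x. v x = 0 \<longleftrightarrow> x = 0) \<and>
     (\<forall>x y. v (x * y) = v x * v y) \<and> (\<forall>x y. v (x + y) \<le> max (v x) (v y))"

definition is_subfield :: "'L::field set \<Rightarrow> bool" where
  "is_subfield K \<longleftrightarrow> 0 \<in> K \<and> 1 \<in> K \<and>
     (\<forall>x\<in>K. \<forall>y\<in>K. x + y \<in> K \<and> x * y \<in> K) \<and>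
     (\<forall>x\<in>K. - x \<in> K \<and> inverse x \<in> K)"

definition v_complete :: "'L::field set \<Rightarrow> ('L \<Rightarrow> real) \<Rightarrow> bool" where
  "v_complete K v \<longleftrightarrow>
     (\<forall>f::nat \<Rightarrow> 'L. (\<forall>n. f n \<in> K) \<and>
        (\<forall>e>0. \<exists>N. \<forall>m\<ge>N. \<forall>n\<ge>N. v (f m - f n) < e)
        \<longrightarrow> (\<exists>a\<in>K. (\<lambda>n. v (f n - a)) \<longlonglongrightarrow> 0))"

definition nontrivially_valued :: "'L::field set \<Rightarrow> ('L \<Rightarrow> real) \<Rightarrow> bool" where
  "nontrivially_valued K v \<longleftrightarrow> (\<exists>a\<in>K. a \<noteq> 0 \<and> v a \<noteq> 1)"

definition vball :: "'L::field set \<Rightarrow> ('L \<Rightarrow> real) \<Rightarrow> 'L \<Rightarrow> real \<Rightarrow> 'L set" where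
  "vball S v c r = {x \<in> S. v (x - c) \<le> r}"

definition spherically_complete :: "'L::field set \<Rightarrow> ('L \<Rightarrow> real) \<Rightarrow> bool" where
  "spherically_complete S v \<longleftrightarrow>
     (\<forall>B :: ('L \<times> real) set.
        B \<noteq> {} \<and> (\<forall>(c, r)\<in>B. c \<in> S \<and> r \<ge> 0) \<and>
        (\<forall>(c, r)\<in>B. \<forall>(d, s)\<in>B. vball S v c r \<subseteq> vball S v d s \<or> vball S v d s \<subseteq> vball S v c r)
        \<longrightarrow> (\<exists>x\<in>S. \<forall>(c, r)\<in>B. x \<in> vball S v c r))"

text \<open>'L (with v) is an immediate extension of K: same value group and same residue field.\<close>
definition immediate_ext :: "'L::field set \<Rightarrow> ('L \<Rightarrow> real) \<Rightarrow> bool" where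
  "immediate_ext K v \<longleftrightarrow>
     v ` (UNIV - {0}) = v ` (K - {0}) \<and>
     (\<forall>x. v x \<le> 1 \<longrightarrow> (\<exists>a\<in>K. v a \<le> 1 \<and> v (x - a) < 1))"

definition alg_closed_sub :: "'L::field set \<Rightarrow> bool" where
  "alg_closed_sub K \<longleftrightarrow>
     (\<forall>p :: 'L poly. degree p > 0 \<and> (\<forall>i. coeff p i \<in> K) \<longrightarrow> (\<exists>x\<in>K. poly p x = 0))"

text \<open>Quotient norm on L/K, evaluated at a representative z of the coset \<pi>(z).\<close>
definition qnorm :: "'L::field set \<Rightarrow> ('L \<Rightarrow> real) \<Rightarrow> 'L \<Rightarrow> real" where
  "qnorm K v z = Inf ((\<lambda>a. v (z - a)) ` K)"

text \<open>A set S of representatives (one per coset) whose cosets \<pi>(S) form an orthogonal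
subset of L/K: no coset is 0, distinct elements lie in distinct cosets, and
the quotient norm of every K-linear combination of finitely many distinct elements
is the maximum of the quotient norms of the terms (note \<pi>(\<lambda> s) = \<lambda> \<pi>(s)).\<close>
definition orthogonal_mod :: "'L::field set \<Rightarrow> ('L \<Rightarrow> real) \<Rightarrow> 'L set \<Rightarrow> bool" where
  "orthogonal_mod K v S \<longleftrightarrow>
     (\<forall>s\<in>S. s \<notin> K) \<and> (\<forall>s\<in>S. \<forall>t\<in>S. s \<noteq> t \<longrightarrow> s - t \<notin> K) \<and>
     (\<forall>F lam. finite F \<and> F \<subseteq> S \<and> F \<noteq> {} \<and> (\<forall>s\<in>F. lam s \<in> K) \<longrightarrow>
        qnorm K v (\<Sum>s\<in>F. lam s * s) = Max ((\<lambda>s. qnorm K v (lam s * s)) ` F))"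

end

theory Submission
  imports Defs
begin

locale nav = fixes v :: "'L::field \<Rightarrow> real" assumes na: "nonarch_abs v"
begin

lemma v_nonneg[simp]: "v x \<ge> 0" using na unfolding nonarch_abs_def by auto
lemma v_zero_iff[simp]: "v x = 0 \<longleftrightarrow> x = 0" using na unfolding nonarch_abs_def by auto
lemma v_mult[simp]: "v (x * y) = v x * v y" using na unfolding nonarch_abs_def by auto
lemma v_add: "v (x + y) \<le> max (v x) (v y)" using na unfolding nonarch_abs_def by auto
lemma v_0[simp]: "v 0 = 0" using v_zero_iff[of 0] by blast
lemma v_pos[simp]: "v x > 0 \<longleftrightarrow> x \<noteq> 0" using v_nonneg[of x] v_zero_iff[of x] by linarith

lemma v_one[simp]: "v 1 = 1"
proof -
  have "v 1 = v 1 * v 1" using v_mult[of 1 1] by simp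
  moreover have "v 1 \<noteq> 0" by simp
  ultimately show ?thesis by (metis mult_cancel_left1)
qed

lemma v_minus[simp]: "v (- x) = v x"
proof -
  have "v (-1) * v (-1) = 1" using v_mult[of "-1" "-1"] by simp
  hence "v (-1) ^ 2 = 1" by (simp add: power2_eq_square)
  hence "v (-1) = 1 \<or> v (-1) = -1" using power2_eq_1_iff by blast
  hence "v (-1) = 1" using v_nonneg[of "-1"] by linarith
  thus ?thesis using v_mult[of "-1" x] by simp
qed

lemma v_diff_comm: "v (x - y) = v (y - x)"
  by (metis minus_diff_eq v_minus)

lemma v_diff: "v (x - y) \<le> max (v x) (v y)"
  using v_add[of x "-y"] by simp

lemma v_add_strict: assumes "v x < v y" shows "v (x + y) = v y"
proof -
  have 1: "v (x + y) \<le> v y" using v_add[of x y] assms by simp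
  have "v y \<le> max (v (x + y)) (v x)" using v_diff[of "x + y" x] by simp
  thus ?thesis using 1 assms by linarith
qed

lemma v_add_strict': assumes "v y < v x" shows "v (x + y) = v x"
  using v_add_strict[OF assms] by (simp add: add.commute)

lemma v_power[simp]: "v (x ^ n) = v x ^ n"
  by (induction n) auto

lemma v_of_nat_le1: "v (of_nat n) \<le> 1"
proof (induction n)
  case 0 then show ?case by simp
next
  case (Suc n)
  have "v (of_nat (Suc n)) = v (1 + of_nat n)" by simp
  also have "\<dots> \<le> max (v 1) (v (of_nat n))" by (rule v_add)
  finally show ?case using Suc by simp
qed

lemma v_divide[simp]: "v (x / y) = v x / v y"
proof (cases "y = 0")
  case True then show ?thesis by simp
next
  case False
  have "v (x / y) * v y = v x" using False by (metis v_mult nonzero_eq_divide_eq)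
  then show ?thesis using False by (simp add: eq_divide_eq)
qed

lemma v_sum_le: assumes "finite A" "\<And>i. i \<in> A \<Longrightarrow> v (f i) \<le> c" "0 \<le> c"
  shows "v (sum f A) \<le> c"
  using assms
proof (induction A rule: finite_induct)
  case empty then show ?case by simp
next
  case (insert x F)
  have e: "sum f (insert x F) = f x + sum f F" using insert by simp
  have m: "v (f x + sum f F) \<le> max (v (f x)) (v (sum f F))" by (rule v_add)
  have a: "v (f x) \<le> c" using insert by simp
  have b: "v (sum f F) \<le> c" using insert by simp
  have "v (f x + sum f F) \<le> c" using m a b by (smt (verit))
  then show ?case using e by simp
qed

lemma v_sum_less: assumes "finite A" "\<And>i. i \<in> A \<Longrightarrow> v (f i) < c" "0 < c"
  shows "v (sum f A) < c"
  using assms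
proof (induction A rule: finite_induct)
  case empty then show ?case by simp
next
  case (insert x F)
  have e: "sum f (insert x F) = f x + sum f F" using insert by simp
  have m: "v (f x + sum f F) \<le> max (v (f x)) (v (sum f F))" by (rule v_add)
  have a: "v (f x) < c" using insert by simp
  have b: "v (sum f F) < c" using insert by simp
  have "v (f x + sum f F) < c" using m a b by (smt (verit))
  then show ?case using e by simp
qed

lemma v_dvd_p: assumes "(p::nat) dvd c" shows "v (of_nat c) \<le> v (of_nat p)"
proof -
  obtain q where "c = p * q" using assms by auto
  hence "v (of_nat c) = v (of_nat p) * v (of_nat q)" by simp
  also have "\<dots> \<le> v (of_nat p) * 1" by (rule mult_left_mono[OF v_of_nat_le1]) simp
  finally show ?thesis by simp
qed

end

locale qn = nav v for v :: "'L::field \<Rightarrow> real" +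
  fixes K :: "'L set" assumes sub: "is_subfield K"
begin

lemma K0[simp]: "0 \<in> K" and K1[simp]: "1 \<in> K"
  using sub unfolding is_subfield_def by blast+
lemma K_add[simp]: "x \<in> K \<Longrightarrow> y \<in> K \<Longrightarrow> x + y \<in> K"
  and K_mult[simp]: "x \<in> K \<Longrightarrow> y \<in> K \<Longrightarrow> x * y \<in> K"
  and K_uminus[simp]: "x \<in> K \<Longrightarrow> - x \<in> K"
  and K_inverse[simp]: "x \<in> K \<Longrightarrow> inverse x \<in> K"
  using sub unfolding is_subfield_def by blast+
lemma K_diff[simp]: "x \<in> K \<Longrightarrow> y \<in> K \<Longrightarrow> x - y \<in> K"
  using K_add[of x "-y"] by simp
lemma K_divide[simp]: "x \<in> K \<Longrightarrow> y \<in> K \<Longrightarrow> x / y \<in> K"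
  by (simp add: divide_inverse)
lemma K_power[simp]: "x \<in> K \<Longrightarrow> x ^ n \<in> K"
  by (induction n) auto
lemma K_of_nat[simp]: "of_nat n \<in> K"
  by (induction n) auto
lemma K_sum[simp]: "(\<And>i. i \<in> A \<Longrightarrow> f i \<in> K) \<Longrightarrow> sum f A \<in> K"
  by (induction A rule: infinite_finite_induct) auto

lemma bdd: "bdd_below ((\<lambda>a. v (x - a)) ` K)"
  by (rule bdd_belowI[of _ 0]) auto

lemma qnorm_le: "a \<in> K \<Longrightarrow> qnorm K v x \<le> v (x - a)"
  unfolding qnorm_def by (rule cInf_lower) (use bdd in auto)

lemma qnorm_ge: "(\<And>a. a \<in> K \<Longrightarrow> c \<le> v (x - a)) \<Longrightarrow> c \<le> qnorm K v x"
  unfolding qnorm_def by (rule cInf_greatest) (use K0 in blast, auto)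

lemma qnorm_nonneg: "0 \<le> qnorm K v x"
  by (rule qnorm_ge) simp

lemma qnorm_lessD: "qnorm K v x < e \<Longrightarrow> \<exists>a\<in>K. v (x - a) < e"
  unfolding qnorm_def using cInf_lessD[of "(\<lambda>a. v (x - a)) ` K" e] K0 by blast

lemma qnorm_K: "a \<in> K \<Longrightarrow> qnorm K v a = 0"
  using qnorm_le[of a a] qnorm_nonneg[of a] by simp

lemma qnorm_add: "qnorm K v (x + y) \<le> max (qnorm K v x) (qnorm K v y)"
proof (rule field_le_epsilon)
  fix e :: real assume e: "0 < e"
  obtain a where a: "a \<in> K" "v (x - a) < qnorm K v x + e"
    using qnorm_lessD[of x "qnorm K v x + e"] e by auto
  obtain b where b: "b \<in> K" "v (y - b) < qnorm K v y + e"
    using qnorm_lessD[of y "qnorm K v y + e"] e by auto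
  have "qnorm K v (x + y) \<le> v (x + y - (a + b))" using a b by (intro qnorm_le) auto
  also have "x + y - (a + b) = (x - a) + (y - b)" by simp
  also have "v \<dots> \<le> max (v (x - a)) (v (y - b))" by (rule v_add)
  finally show "qnorm K v (x + y) \<le> max (qnorm K v x) (qnorm K v y) + e"
    using a b by (smt (verit))
qed

lemma qnorm_sum: assumes "finite F" "F \<noteq> {}"
  shows "qnorm K v (sum f F) \<le> Max ((\<lambda>s. qnorm K v (f s)) ` F)"
  using assms
proof (induction F rule: finite_ne_induct)
  case (singleton x) then show ?case by simp
next
  case (insert x F)
  have "qnorm K v (sum f (insert x F)) = qnorm K v (f x + sum f F)" using insert by simp
  also have "\<dots> \<le> max (qnorm K v (f x)) (qnorm K v (sum f F))" by (rule qnorm_add)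
  also have "\<dots> \<le> max (qnorm K v (f x)) (Max ((\<lambda>s. qnorm K v (f s)) ` F))"
    using insert by simp
  also have "\<dots> = Max ((\<lambda>s. qnorm K v (f s)) ` insert x F)" using insert by simp
  finally show ?case .
qed

end

context nav begin

definition gnorm :: "'L poly \<Rightarrow> real \<Rightarrow> real" where
  "gnorm h \<rho> = Max ((\<lambda>k. v (coeff h k) * \<rho> ^ k) ` {..degree h})"

lemma gnorm_ge: assumes "0 \<le> \<rho>" shows "v (coeff h k) * \<rho> ^ k \<le> gnorm h \<rho>"
proof (cases "k \<le> degree h")
  case True then show ?thesis unfolding gnorm_def by (intro Max_ge) auto
next
  case False
  hence "coeff h k = 0" by (simp add: coeff_eq_0)
  moreover have "v (coeff h 0) * \<rho> ^ 0 \<le> gnorm h \<rho>" unfolding gnorm_def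
    using imageI[of 0 "{..degree h}" "\<lambda>k. v (coeff h k) * \<rho> ^ k"] by (intro Max_ge) auto
  ultimately have "0 \<le> gnorm h \<rho>" using order_trans[OF v_nonneg[of "coeff h 0"]] by simp
  then show ?thesis using \<open>coeff h k = 0\<close> by simp
qed

lemma gnorm_nonneg: "0 \<le> \<rho> \<Longrightarrow> 0 \<le> gnorm h \<rho>"
  using gnorm_ge[of \<rho> h 0] by (smt (verit) mult_nonneg_nonneg v_nonneg zero_le_power)

lemma gnorm_ex: "\<exists>k\<le>degree h. gnorm h \<rho> = v (coeff h k) * \<rho> ^ k"
proof -
  have "gnorm h \<rho> \<in> (\<lambda>k. v (coeff h k) * \<rho> ^ k) ` {..degree h}"
    unfolding gnorm_def by (intro Max_in) auto
  then show ?thesis by auto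
qed

lemma gnorm_le: "(\<And>k. v (coeff h k) * \<rho> ^ k \<le> B) \<Longrightarrow> gnorm h \<rho> \<le> B"
  using gnorm_ex[of h \<rho>] by auto

lemma gnorm_const[simp]: "gnorm [:c:] \<rho> = v c"
  unfolding gnorm_def by simp

lemma gnorm_0[simp]: "gnorm 0 \<rho> = 0"
  unfolding gnorm_def by simp

lemma gnorm_pos: assumes "h \<noteq> 0" "0 < \<rho>" shows "0 < gnorm h \<rho>"
proof -
  have "0 < v (coeff h (degree h)) * \<rho> ^ degree h" using assms by simp
  also have "\<dots> \<le> gnorm h \<rho>" using assms by (intro gnorm_ge) auto
  finally show ?thesis .
qed

lemma coeff_lin0: "coeff ([:-g, 1:] * h) 0 = - g * coeff h 0" for g :: 'L
  by simp
lemma coeff_linS: "coeff ([:-g, 1:] * h) (Suc k) = coeff h k - g * coeff h (Suc k)" for g :: 'L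
  by simp

lemma gnorm_lin: assumes rho: "0 < \<rho>"
  shows "gnorm ([:-g, 1:] * h) \<rho> = max \<rho> (v g) * gnorm h \<rho>"
proof (cases "h = 0")
  case True then show ?thesis by simp
next
  case hnz: False
  define G where "G = gnorm h \<rho>"
  define t where "t = (\<lambda>k. v (coeff h k) * \<rho> ^ k)"
  have Gpos: "0 < G" unfolding G_def using gnorm_pos[OF hnz rho] .
  have tG: "t k \<le> G" for k unfolding t_def G_def using gnorm_ge rho by simp
  have upper: "gnorm ([:-g, 1:] * h) \<rho> \<le> max \<rho> (v g) * G"
  proof (rule gnorm_le)
    fix k
    show "v (coeff ([:-g, 1:] * h) k) * \<rho> ^ k \<le> max \<rho> (v g) * G"
    proof (cases k)
      case 0
      have "v (coeff ([:-g, 1:] * h) k) * \<rho> ^ k = v g * t 0" using 0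
        by (simp add: coeff_lin0 t_def)
      also have "\<dots> \<le> max \<rho> (v g) * G" using tG[of 0] rho
        by (intro mult_mono) (auto simp: t_def)
      finally show ?thesis .
    next
      case (Suc j)
      have "v (coeff ([:-g, 1:] * h) k) * \<rho> ^ k \<le> max (v (coeff h j)) (v (g * coeff h k)) * \<rho> ^ k"
        using Suc v_diff[of "coeff h j" "g * coeff h k"] rho by (simp add: coeff_linS mult_right_mono)
      also have "\<dots> = max (\<rho> * t j) (v g * t k)" using Suc rho
        by (simp add: t_def max_mult_distrib_right) (simp add: algebra_simps)
      also have "\<dots> \<le> max \<rho> (v g) * G"
        using mult_mono[OF _ tG[of j], of \<rho> "max \<rho> (v g)"] mult_mono[OF _ tG[of k], of "v g" "max \<rho> (v g)"]
          rho Gpos by (simp add: t_def)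
      finally show ?thesis .
    qed
  qed
  define T where "T = {k. k \<le> degree h \<and> t k = G}"
  have Tfin: "finite T" unfolding T_def by auto
  have Tne: "T \<noteq> {}" using gnorm_ex[of h \<rho>] unfolding T_def G_def t_def by auto
  have notT: "t j < G" if "j \<notin> T" for j
  proof (cases "j \<le> degree h")
    case True then show ?thesis using that tG[of j] unfolding T_def by auto
  next
    case False then show ?thesis using Gpos by (simp add: t_def coeff_eq_0)
  qed
  have lower: "max \<rho> (v g) * G \<le> gnorm ([:-g, 1:] * h) \<rho>"
  proof (cases "v g \<le> \<rho>")
    case True
    define k where "k = Max T"
    have kT: "k \<in> T" unfolding k_def using Tfin Tne by simp
    have k1: "t (Suc k) < G" using notT[of "Suc k"] Max_ge[OF Tfin, of "Suc k"] unfolding k_def by auto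
    have "v (g * coeff h (Suc k)) * \<rho> ^ Suc k = v g * t (Suc k)" by (simp add: t_def)
    also have "\<dots> \<le> \<rho> * t (Suc k)" using True rho by (intro mult_right_mono) (auto simp: t_def)
    also have "\<dots> < \<rho> * G" using k1 rho by simp
    also have "\<dots> = v (coeff h k) * \<rho> ^ Suc k" using kT unfolding T_def t_def by auto
    finally have "v (g * coeff h (Suc k)) < v (coeff h k)" using rho by simp
    hence "v (coeff h k - g * coeff h (Suc k)) = v (coeff h k)"
      using v_add_strict'[of "- (g * coeff h (Suc k))" "coeff h k"] by simp
    hence "v (coeff ([:-g, 1:] * h) (Suc k)) * \<rho> ^ Suc k = \<rho> * G"
      using kT unfolding T_def t_def by (simp add: coeff_linS)
    also have "\<rho> * G = max \<rho> (v g) * G" using True by simp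
    finally show ?thesis using gnorm_ge[of \<rho> "[:-g, 1:] * h" "Suc k"] rho by simp
  next
    case False
    define k where "k = Min T"
    have kT: "k \<in> T" unfolding k_def using Tfin Tne by simp
    have "v (coeff ([:-g, 1:] * h) k) * \<rho> ^ k = v g * G"
    proof (cases k)
      case 0 then show ?thesis using kT unfolding T_def t_def by (simp add: coeff_lin0)
    next
      case (Suc j)
      have "j \<notin> T" using Min_le[OF Tfin, of j] Suc unfolding k_def by auto
      hence j1: "t j < G" by (rule notT)
      have "v (coeff h j) * \<rho> ^ k = \<rho> * t j" using Suc by (simp add: t_def)
      also have "\<dots> < \<rho> * G" using j1 rho by simp
      also have "\<dots> < v g * G" using False Gpos by simp
      also have "\<dots> = v (g * coeff h k) * \<rho> ^ k" using kT unfolding T_def t_def by auto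
      finally have "v (coeff h j) < v (g * coeff h k)" using rho by simp
      hence "v (coeff h j - g * coeff h k) = v (g * coeff h k)"
        using v_add_strict[of "coeff h j" "- (g * coeff h k)"] by simp
      then show ?thesis using kT Suc unfolding T_def t_def by (simp add: coeff_linS)
    qed
    also have "v g * G = max \<rho> (v g) * G" using False by simp
    finally show ?thesis using gnorm_ge[of \<rho> "[:-g, 1:] * h" k] rho by simp
  qed
  show ?thesis using upper lower unfolding G_def by simp
qed

end

context qn begin

lemma poly_K: "(\<And>i. coeff p i \<in> K) \<Longrightarrow> c \<in> K \<Longrightarrow> poly p c \<in> K"
proof (induction p)
  case (pCons a p)
  have "\<And>i. coeff p i \<in> K" using pCons(3)[of "Suc _"] by simp
  moreover have "a \<in> K" using pCons(3)[of 0] by simp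
  ultimately show ?case using pCons by simp
qed simp

lemma synth_K: "(\<And>i. coeff p i \<in> K) \<Longrightarrow> c \<in> K \<Longrightarrow> coeff (synthetic_div p c) i \<in> K"
proof (induction p arbitrary: i)
  case (pCons a p)
  have cp: "\<And>i. coeff p i \<in> K" using pCons(3)[of "Suc _"] by simp
  show ?case
  proof (cases i)
    case 0 then show ?thesis using poly_K[OF cp pCons(4)] by simp
  next
    case (Suc j) then show ?thesis using pCons(2)[OF cp pCons(4)] by simp
  qed
qed simp

lemma gauss_eval:
  assumes alg: "alg_closed_sub K" and strict: "\<And>a. a \<in> K \<Longrightarrow> r < v (z - a)" and rpos: "0 < r"
    and cK: "\<And>i. coeff q i \<in> K"
  shows "\<exists>\<delta>>r. \<forall>a\<in>K. v (z - a) < \<delta> \<longrightarrow> v (poly q z) = gnorm (pcompose q [:a, 1:]) (v (z - a))"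
  using cK
proof (induction "degree q" arbitrary: q)
  case 0
  then obtain c where q: "q = [:c:]" by (metis degree_eq_zeroE)
  show ?case by (rule exI[of _ "r + 1"]) (simp add: q)
next
  case (Suc n)
  obtain \<beta> where b: "\<beta> \<in> K" "poly q \<beta> = 0"
    using alg Suc(2,3) unfolding alg_closed_sub_def by (metis zero_less_Suc)
  define q' where "q' = synthetic_div q \<beta>"
  have qq: "q = [:-\<beta>, 1:] * q'" using synthetic_div_correct'[of \<beta> q] b unfolding q'_def by simp
  have dq': "n = degree q'" unfolding q'_def degree_synthetic_div using Suc(2) by simp
  have cq': "\<And>i. coeff q' i \<in> K" unfolding q'_def using synth_K[OF Suc(3) b(1)] .
  obtain d' where d': "d' > r" "\<forall>a\<in>K. v (z - a) < d' \<longrightarrow> v (poly q' z) = gnorm (pcompose q' [:a, 1:]) (v (z - a))"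
    using Suc(1)[OF dq' cq'] by blast
  have zb: "r < v (z - \<beta>)" using strict b by simp
  show ?case
  proof (intro exI[of _ "min d' (v (z - \<beta>))"] conjI ballI impI)
    show "r < min d' (v (z - \<beta>))" using d' zb by simp
    fix a assume a: "a \<in> K" "v (z - a) < min d' (v (z - \<beta>))"
    define \<rho> where "\<rho> = v (z - a)"
    have rho: "0 < \<rho>" using strict[OF a(1)] rpos unfolding \<rho>_def by linarith
    have "a - \<beta> = (z - \<beta>) + (- (z - a))" by simp
    hence vab: "v (\<beta> - a) = v (z - \<beta>)" using v_add_strict'[of "- (z - a)" "z - \<beta>"] a(2)
      by (simp add: v_diff_comm[of \<beta> a] v_diff_comm[of a z])
    have pc: "pcompose q [:a, 1:] = [:- (\<beta> - a), 1:] * pcompose q' [:a, 1:]"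
      unfolding qq pcompose_mult by (simp add: pcompose_pCons)
    have "poly q z = (z - \<beta>) * poly q' z" unfolding qq by (simp add: algebra_simps)
    hence "v (poly q z) = v (z - \<beta>) * v (poly q' z)" by simp
    also have "\<dots> = max \<rho> (v (\<beta> - a)) * gnorm (pcompose q' [:a, 1:]) \<rho>"
      using d' a vab unfolding \<rho>_def by simp
    also have "\<dots> = gnorm (pcompose q [:a, 1:]) \<rho>" unfolding pc gnorm_lin[OF rho] ..
    finally show "v (poly q z) = gnorm (pcompose q [:a, 1:]) (v (z - a))" unfolding \<rho>_def .
  qed
qed

end

lemma coeff_lin_pow: "coeff ([:a, 1:] ^ n) k = of_nat (n choose k) * a ^ (n - k)"
  for a :: "'a::comm_ring_1"
proof (induction n arbitrary: k)
  case 0 then show ?case by (cases k) auto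
next
  case (Suc n)
  have e: "[:a, 1:] ^ Suc n = smult a ([:a, 1:] ^ n) + pCons 0 ([:a, 1:] ^ n)"
    by (simp add: mult_pCons_left)
  show ?case
  proof (cases k)
    case 0 then show ?thesis unfolding e using Suc by simp
  next
    case (Suc j)
    have "coeff ([:a, 1:] ^ Suc n) k = a * (of_nat (n choose Suc j) * a ^ (n - Suc j)) + of_nat (n choose j) * a ^ (n - j)"
      unfolding e using Suc.IH Suc by simp
    also have "\<dots> = of_nat (Suc n choose k) * a ^ (Suc n - k)"
    proof (cases "Suc j \<le> n")
      case True
      have "a * a ^ (n - Suc j) = a ^ (n - j)" using True
        by (metis Suc_diff_Suc Suc_le_lessD power_Suc)
      hence "a * (of_nat (n choose Suc j) * a ^ (n - Suc j)) = of_nat (n choose Suc j) * a ^ (n - j)"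
        by (metis mult.left_commute)
      then show ?thesis using Suc True by (simp add: algebra_simps)
    next
      case False
      then show ?thesis using Suc by (simp add: binomial_eq_0)
    qed
    finally show ?thesis .
  qed
qed

lemma pcompose_power_left: "pcompose (p ^ n) q = (pcompose p q) ^ n"
  by (induction n) (simp_all add: pcompose_1 pcompose_mult)

lemma pcompose_monom: "pcompose (monom c n) q = smult c (q ^ n)"
  unfolding monom_altdef pcompose_smult pcompose_power_left by (simp add: pcompose_pCons)

lemma prime_dvd_choose_pow:
  assumes p: "prime (p::nat)" and k: "0 < k" "k < p ^ i"
  shows "p dvd (p ^ i choose k)"
proof (rule ccontr)
  assume nd: "\<not> p dvd (p ^ i choose k)"
  have "k * (p ^ i choose k) = p ^ i * ((p ^ i - 1) choose (k - 1))"
    using times_binomial_minus1_eq[OF k(1)] .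
  hence "p ^ i dvd k * (p ^ i choose k)" by simp
  moreover have "coprime (p ^ i) (p ^ i choose k)"
    using nd p by (simp add: prime_imp_coprime coprime_power_left_iff)
  ultimately have "p ^ i dvd k" using coprime_dvd_mult_left_iff by blast
  then show False using k by (simp add: nat_dvd_not_less)
qed


locale mainsetup = qn v K for v :: "'L::field \<Rightarrow> real" and K +
  fixes z :: 'L and r t :: real and p m :: nat
  assumes alg: "alg_closed_sub K"
  and strict: "\<And>a. a \<in> K \<Longrightarrow> r < v (z - a)"
  and approx: "\<And>e. r < e \<Longrightarrow> \<exists>a\<in>K. v (z - a) < e"
  and rpos: "0 < r" and t1: "1 < t" and sz: "v z < r * t"
  and pp: "prime p" and pt: "v (of_nat p) * t ^ (p ^ m) < 1"
begin

lemma p1: "1 < p" using pp prime_gt_1_nat by blast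

lemma pow_le_N: "i < m \<Longrightarrow> p ^ i \<le> p ^ m"
  using p1 by (intro power_increasing) auto

lemma t_pow_le: "D \<le> p ^ m \<Longrightarrow> t ^ D \<le> t ^ (p ^ m)"
  using t1 by (intro power_increasing) auto

lemma lower:
  assumes I: "finite I" "I \<subseteq> {..<m}" and lamK: "\<And>i. lam i \<in> K" and j: "j \<in> I" and b: "b \<in> K"
  shows "v (lam j) * r ^ (p ^ j) \<le> v ((\<Sum>i\<in>I. lam i * z ^ (p ^ i)) - b)"
proof -
  define q where "q = (\<Sum>i\<in>I. monom (lam i) (p ^ i)) - [:b:]"
  have cq: "coeff q k \<in> K" for k
    unfolding q_def coeff_diff coeff_sum using lamK b by (cases k) auto
  have pq: "poly q z = (\<Sum>i\<in>I. lam i * z ^ (p ^ i)) - b"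
    unfolding q_def by (simp add: poly_sum poly_monom)
  obtain \<delta> where d: "\<delta> > r" "\<forall>a\<in>K. v (z - a) < \<delta> \<longrightarrow> v (poly q z) = gnorm (pcompose q [:a, 1:]) (v (z - a))"
    using gauss_eval[OF alg strict rpos cq] by blast
  define s where "s = v z"
  have rs: "r < s" using strict[of 0] unfolding s_def by simp
  obtain a where a: "a \<in> K" "v (z - a) < min \<delta> s" using approx[of "min \<delta> s"] d rs by auto
  define \<rho> where "\<rho> = v (z - a)"
  have r\<rho>: "r < \<rho>" unfolding \<rho>_def using strict[OF a(1)] .
  have \<rho>pos: "0 < \<rho>" using r\<rho> rpos by linarith
  have \<rho>s: "\<rho> < s" using a unfolding \<rho>_def by simp
  have va: "v a = s"
  proof -
    have "a = z + (- (z - a))" by simp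
    moreover have "v (- (z - a)) < v z" using \<rho>s unfolding \<rho>_def s_def v_minus .
    ultimately show ?thesis unfolding s_def using v_add_strict'[of "- (z - a)" z] by simp
  qed
  have s\<rho>t: "s \<le> \<rho> * t"
  proof -
    have "s < r * t" using sz unfolding s_def .
    also have "r * t \<le> \<rho> * t" using r\<rho> t1 by simp
    finally show ?thesis by simp
  qed
  have eq: "v (poly q z) = gnorm (pcompose q [:a, 1:]) \<rho>" using d a unfolding \<rho>_def by simp
  define f where "f i = v (lam i) * \<rho> ^ (p ^ i)" for i
  have Ine: "I \<noteq> {}" using j by auto
  have "Max (f ` I) \<in> f ` I" using I Ine by (intro Max_in) auto
  then obtain i0 where i0: "i0 \<in> I" "f i0 = Max (f ` I)" by auto
  have fi0: "f i \<le> f i0" if "i \<in> I" for i using i0 I that by simp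
  have main: "f j \<le> gnorm (pcompose q [:a, 1:]) \<rho>"
  proof (cases "lam i0 = 0")
    case True
    have "f j \<le> 0" using fi0[OF j] True unfolding f_def by simp
    also have "0 \<le> gnorm (pcompose q [:a, 1:]) \<rho>" using gnorm_nonneg \<rho>pos by simp
    finally show ?thesis .
  next
    case False
    define n0 where "n0 = p ^ i0"
    have n0pos: "0 < n0" unfolding n0_def using p1 by simp
    have pcq: "pcompose q [:a, 1:] = (\<Sum>i\<in>I. smult (lam i) ([:a, 1:] ^ (p ^ i))) - [:b:]"
      unfolding q_def pcompose_diff pcompose_sum pcompose_monom by simp
    define T where "T i = lam i * of_nat (p ^ i choose n0) * a ^ (p ^ i - n0)" for i
    have cH: "coeff (pcompose q [:a, 1:]) n0 = (\<Sum>i\<in>I. T i)"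
      using n0pos unfolding pcq coeff_diff coeff_sum by (cases n0) (simp_all add: coeff_lin_pow T_def mult.assoc)
    also have "\<dots> = T i0 + (\<Sum>i\<in>I - {i0}. T i)" using I i0 by (simp add: sum.remove)
    also have "T i0 = lam i0" unfolding T_def n0_def by simp
    finally have cH': "coeff (pcompose q [:a, 1:]) n0 = lam i0 + (\<Sum>i\<in>I - {i0}. T i)" .
    have small: "v (T i) < v (lam i0)" if iI: "i \<in> I - {i0}" for i
    proof (cases "i < i0")
      case True
      have "p ^ i < n0" unfolding n0_def using True p1 by (simp add: power_strict_increasing)
      then have "T i = 0" unfolding T_def by (simp add: binomial_eq_0)
      then show ?thesis using False by simp
    next
      case False': False
      hence gt: "i0 < i" using iI by auto
      define D where "D = p ^ i - n0"
      have n0lt: "n0 < p ^ i" unfolding n0_def using gt p1 by (simp add: power_strict_increasing)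
      have dv: "p dvd (p ^ i choose n0)" using prime_dvd_choose_pow[OF pp n0pos n0lt] .
      have vC: "v (of_nat (p ^ i choose n0)) \<le> v (of_nat p)" using v_dvd_p[OF dv] .
      have im: "i < m" using iI I by auto
      have DN: "D \<le> p ^ m" unfolding D_def using pow_le_N[OF im] by simp
      have sD: "s ^ D \<le> \<rho> ^ D * t ^ (p ^ m)"
      proof -
        have "s ^ D \<le> (\<rho> * t) ^ D" using s\<rho>t rs rpos by (intro power_mono) auto
        also have "\<dots> = \<rho> ^ D * t ^ D" by (simp add: power_mult_distrib)
        also have "\<dots> \<le> \<rho> ^ D * t ^ (p ^ m)" using t_pow_le[OF DN] \<rho>pos by simp
        finally show ?thesis .
      qed
      have fi: "v (lam i) * \<rho> ^ D \<le> v (lam i0)"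
      proof -
        have "v (lam i) * \<rho> ^ D * \<rho> ^ n0 = f i" unfolding f_def D_def using n0lt
          by (simp add: mult.assoc power_add[symmetric])
        also have "\<dots> \<le> f i0" using fi0 iI by simp
        also have "\<dots> = v (lam i0) * \<rho> ^ n0" unfolding f_def n0_def ..
        finally show ?thesis using \<rho>pos by simp
      qed
      have "v (T i) = v (lam i) * v (of_nat (p ^ i choose n0)) * s ^ D"
        unfolding T_def D_def using va by simp
      also have "\<dots> \<le> v (lam i) * v (of_nat p) * (\<rho> ^ D * t ^ (p ^ m))"
        using vC sD rs rpos by (intro mult_mono mult_left_mono) auto
      also have "\<dots> = (v (of_nat p) * t ^ (p ^ m)) * (v (lam i) * \<rho> ^ D)" by (simp add: algebra_simps)
      also have "\<dots> \<le> (v (of_nat p) * t ^ (p ^ m)) * v (lam i0)"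
        using fi t1 by (intro mult_left_mono) auto
      also have "\<dots> < v (lam i0)" using pt \<open>lam i0 \<noteq> 0\<close> by simp
      finally show ?thesis .
    qed
    have "v (\<Sum>i\<in>I - {i0}. T i) < v (lam i0)"
      using I \<open>lam i0 \<noteq> 0\<close> small by (intro v_sum_less) auto
    hence vc: "v (coeff (pcompose q [:a, 1:]) n0) = v (lam i0)"
      unfolding cH' by (rule v_add_strict')
    have "f j \<le> f i0" using fi0 j by simp
    also have "\<dots> = v (coeff (pcompose q [:a, 1:]) n0) * \<rho> ^ n0" using vc unfolding f_def n0_def by simp
    also have "\<dots> \<le> gnorm (pcompose q [:a, 1:]) \<rho>" using gnorm_ge \<rho>pos by simp
    finally show ?thesis .
  qed
  have "v (lam j) * r ^ (p ^ j) \<le> f j" unfolding f_def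
    using r\<rho> rpos by (intro mult_left_mono power_mono) auto
  also have "\<dots> \<le> v (poly q z)" using main eq by simp
  finally show ?thesis unfolding pq .
qed

end

context mainsetup begin

lemma pow_diff_bound:
  assumes im: "i < m" and a: "a \<in> K" "v (z - a) < v z"
  shows "v (z ^ (p ^ i) - a ^ (p ^ i)) \<le> v (z - a) ^ (p ^ i)"
proof -
  define n where "n = p ^ i"
  define w where "w = z - a"
  define \<rho> where "\<rho> = v w"
  define s where "s = v z"
  have r\<rho>: "r < \<rho>" unfolding \<rho>_def w_def using strict[OF a(1)] .
  have \<rho>pos: "0 < \<rho>" using r\<rho> rpos by linarith
  have \<rho>s: "\<rho> < s" using a unfolding \<rho>_def w_def s_def by simp
  have va: "v a = s"
  proof -
    have "a = z + (- (z - a))" by simp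
    moreover have "v (- (z - a)) < v z" using a(2) unfolding v_minus .
    ultimately show ?thesis unfolding s_def using v_add_strict'[of "- (z - a)" z] by simp
  qed
  have s\<rho>t: "s \<le> \<rho> * t"
  proof -
    have "s < r * t" using sz unfolding s_def .
    also have "r * t \<le> \<rho> * t" using r\<rho> t1 by simp
    finally show ?thesis by simp
  qed
  have nN: "n \<le> p ^ m" unfolding n_def using pow_le_N[OF im] .
  have npos: "0 < n" unfolding n_def using p1 by simp
  define T where "T k = of_nat (n choose k) * w ^ k * a ^ (n - k)" for k
  have "z ^ n = (w + a) ^ n" unfolding w_def by simp
  also have "\<dots> = (\<Sum>k\<le>n. T k)" unfolding T_def by (rule binomial_ring)
  also have "\<dots> = T 0 + (\<Sum>k\<in>{..n} - {0}. T k)" by (simp add: sum.remove)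
  also have "T 0 = a ^ n" unfolding T_def by simp
  finally have zn: "z ^ n - a ^ n = (\<Sum>k\<in>{..n} - {0}. T k)" by simp
  have tb: "v (T k) \<le> \<rho> ^ n" if k: "k \<in> {..n} - {0}" for k
  proof (cases "k = n")
    case True then show ?thesis unfolding T_def \<rho>_def by simp
  next
    case False
    hence kl: "0 < k" "k < n" using k by auto
    have vC: "v (of_nat (n choose k)) \<le> v (of_nat p)"
      using v_dvd_p[OF prime_dvd_choose_pow[OF pp kl[unfolded n_def]]] unfolding n_def .
    have sD: "s ^ (n - k) \<le> \<rho> ^ (n - k) * t ^ (p ^ m)"
    proof -
      have "s ^ (n - k) \<le> (\<rho> * t) ^ (n - k)" using s\<rho>t by (intro power_mono) (use \<rho>s \<rho>pos in auto)
      also have "\<dots> = \<rho> ^ (n - k) * t ^ (n - k)" by (simp add: power_mult_distrib)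
      also have "\<dots> \<le> \<rho> ^ (n - k) * t ^ (p ^ m)" using t_pow_le[of "n - k"] nN \<rho>pos by simp
      finally show ?thesis .
    qed
    have "v (T k) = v (of_nat (n choose k)) * \<rho> ^ k * s ^ (n - k)"
      unfolding T_def \<rho>_def using va by simp
    also have "\<dots> \<le> v (of_nat p) * \<rho> ^ k * (\<rho> ^ (n - k) * t ^ (p ^ m))"
      using vC sD \<rho>s \<rho>pos by (intro mult_mono mult_right_mono) auto
    also have "\<dots> = (v (of_nat p) * t ^ (p ^ m)) * (\<rho> ^ k * \<rho> ^ (n - k))" by (simp add: algebra_simps)
    also have "\<rho> ^ k * \<rho> ^ (n - k) = \<rho> ^ n" using kl by (simp add: power_add[symmetric])
    also have "(v (of_nat p) * t ^ (p ^ m)) * \<rho> ^ n \<le> 1 * \<rho> ^ n"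
      using pt \<rho>pos by (intro mult_right_mono) auto
    finally show ?thesis by simp
  qed
  have "v (z ^ n - a ^ n) \<le> \<rho> ^ n" unfolding zn using tb \<rho>pos by (intro v_sum_le) auto
  then show ?thesis unfolding n_def \<rho>_def w_def .
qed

lemma upper:
  assumes im: "i < m" and lam: "lam \<in> K"
  shows "qnorm K v (lam * z ^ (p ^ i)) \<le> v lam * r ^ (p ^ i)"
proof -
  define s where "s = v z"
  have rs: "r < s" using strict[of 0] unfolding s_def by simp
  have bnd: "qnorm K v (lam * z ^ (p ^ i)) \<le> v lam * e ^ (p ^ i)" if e: "r < e" "e \<le> s" for e
  proof -
    obtain a where a: "a \<in> K" "v (z - a) < e" using approx[OF e(1)] by auto
    have "qnorm K v (lam * z ^ (p ^ i)) \<le> v (lam * z ^ (p ^ i) - lam * a ^ (p ^ i))"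
      using a lam by (intro qnorm_le) auto
    also have "\<dots> = v lam * v (z ^ (p ^ i) - a ^ (p ^ i))" by (simp add: right_diff_distrib[symmetric])
    also have "\<dots> \<le> v lam * v (z - a) ^ (p ^ i)"
      using pow_diff_bound[OF im a(1)] a(2) e(2) unfolding s_def by (intro mult_left_mono) auto
    also have "\<dots> \<le> v lam * e ^ (p ^ i)" using a(2) by (intro mult_left_mono power_mono) auto
    finally show ?thesis .
  qed
  define E where "E k = r + (s - r) * inverse (real (Suc k))" for k
  have Ein: "r < E k \<and> E k \<le> s" for k
  proof -
    have "0 < inverse (real (Suc k))" by auto
    moreover have "inverse (real (Suc k)) \<le> 1" by (simp add: inverse_le_1_iff)
    ultimately
    have "0 < (s - r) * inverse (real (Suc k))" "(s - r) * inverse (real (Suc k)) \<le> (s - r)"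
      using rs by (auto intro: mult_left_le)
    then show ?thesis unfolding E_def by linarith
  qed
  have "E \<longlonglongrightarrow> r + (s - r) * 0" unfolding E_def
    by (intro tendsto_intros LIMSEQ_inverse_real_of_nat)
  hence "(\<lambda>k. v lam * E k ^ (p ^ i)) \<longlonglongrightarrow> v lam * r ^ (p ^ i)"
    by (auto intro!: tendsto_intros)
  then show ?thesis
    by (rule LIMSEQ_le_const) (use bnd Ein in auto)
qed

end

context mainsetup begin

lemma lower_q:
  assumes I: "finite I" "I \<subseteq> {..<m}" and lamK: "\<And>i. lam i \<in> K" and j: "j \<in> I"
  shows "v (lam j) * r ^ (p ^ j) \<le> qnorm K v (\<Sum>i\<in>I. lam i * z ^ (p ^ i))"
  by (rule qnorm_ge) (rule lower[OF I lamK j])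

lemma notK:
  assumes I: "finite I" "I \<subseteq> {..<m}" and lamK: "\<And>i. lam i \<in> K" and j: "j \<in> I" "lam j \<noteq> 0"
  shows "(\<Sum>i\<in>I. lam i * z ^ (p ^ i)) \<notin> K"
proof
  assume inK: "(\<Sum>i\<in>I. lam i * z ^ (p ^ i)) \<in> K"
  have "v (lam j) * r ^ (p ^ j) \<le> v ((\<Sum>i\<in>I. lam i * z ^ (p ^ i)) - (\<Sum>i\<in>I. lam i * z ^ (p ^ i)))"
    by (rule lower[OF I lamK j(1) inK])
  moreover have "0 < v (lam j) * r ^ (p ^ j)" using j(2) rpos by simp
  ultimately show False by simp
qed

lemma diff_notK:
  assumes "i < m" "j < m" "i \<noteq> j"
  shows "z ^ (p ^ i) - z ^ (p ^ j) \<notin> K"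
proof -
  define lam where "lam k = (if k = i then 1 else - 1 :: 'L)" for k
  have "(\<Sum>k\<in>{i, j}. lam k * z ^ (p ^ k)) \<notin> K"
    using assms by (intro notK[of _ lam i]) (auto simp: lam_def)
  then show ?thesis using assms by (simp add: lam_def)
qed

lemma single_notK:
  assumes "i < m" shows "z ^ (p ^ i) \<notin> K"
  using notK[of "{i}" "\<lambda>_. 1" i] assms by simp

theorem ortho: "\<exists>x :: nat \<Rightarrow> 'L. inj_on x {..<m} \<and> orthogonal_mod K v (x ` {..<m})"
proof (intro exI conjI)
  define x where "x i = z ^ (p ^ i)" for i
  show inj: "inj_on x {..<m}"
  proof (rule inj_onI)
    fix i j assume ij: "i \<in> {..<m}" "j \<in> {..<m}" "x i = x j"
    show "i = j"
    proof (rule ccontr)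
      assume "i \<noteq> j"
      then have "x i - x j \<notin> K" using diff_notK[of i j] ij unfolding x_def by blast
      then show False using ij by simp
    qed
  qed
  show "orthogonal_mod K v (x ` {..<m})"
    unfolding orthogonal_mod_def
  proof (intro conjI ballI allI impI)
    fix s assume "s \<in> x ` {..<m}"
    then show "s \<notin> K" using single_notK unfolding x_def by auto
  next
    fix s u assume "s \<in> x ` {..<m}" "u \<in> x ` {..<m}" "s \<noteq> u"
    then show "s - u \<notin> K" using diff_notK unfolding x_def by auto
  next
    fix F and lam' :: "'L \<Rightarrow> 'L"
    assume F: "finite F \<and> F \<subseteq> x ` {..<m} \<and> F \<noteq> {} \<and> (\<forall>s\<in>F. lam' s \<in> K)"
    define I where "I = {i \<in> {..<m}. x i \<in> F}"
    have FI: "F = x ` I" using F unfolding I_def by auto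
    have Ifin: "finite I" "I \<subseteq> {..<m}" unfolding I_def by auto
    have injI: "inj_on x I" using inj_on_subset[OF inj Ifin(2)] .
    define lam where "lam i = (if x i \<in> F then lam' (x i) else 0)" for i
    have lamK: "lam i \<in> K" for i using F unfolding lam_def by auto
    have sumeq: "(\<Sum>s\<in>F. lam' s * s) = (\<Sum>i\<in>I. lam i * z ^ (p ^ i))"
      unfolding FI sum.reindex[OF injI] by (intro sum.cong) (auto simp: lam_def x_def I_def)
    have "finite F" "F \<noteq> {}" using F by auto
    have le: "qnorm K v (\<Sum>s\<in>F. lam' s * s) \<le> Max ((\<lambda>s. qnorm K v (lam' s * s)) ` F)"
      by (rule qnorm_sum) fact+
    have ge: "Max ((\<lambda>s. qnorm K v (lam' s * s)) ` F) \<le> qnorm K v (\<Sum>s\<in>F. lam' s * s)"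
    proof (rule Max.boundedI)
      show "finite ((\<lambda>s. qnorm K v (lam' s * s)) ` F)" using \<open>finite F\<close> by simp
      show "(\<lambda>s. qnorm K v (lam' s * s)) ` F \<noteq> {}" using \<open>F \<noteq> {}\<close> by simp
    next
      fix y assume "y \<in> (\<lambda>s. qnorm K v (lam' s * s)) ` F"
      then obtain j where j: "j \<in> I" "y = qnorm K v (lam' (x j) * x j)" unfolding FI by auto
      have jm: "j < m" using j Ifin by auto
      have lj: "lam' (x j) = lam j" using j unfolding lam_def I_def by auto
      have "y \<le> v (lam j) * r ^ (p ^ j)" using upper[OF jm lamK[of j]] lj unfolding j(2) x_def by simp
      also have "\<dots> \<le> qnorm K v (\<Sum>i\<in>I. lam i * z ^ (p ^ i))" by (rule lower_q[OF Ifin lamK j(1)])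
      finally show "y \<le> qnorm K v (\<Sum>s\<in>F. lam' s * s)" unfolding sumeq .
    qed
    show "qnorm K v (\<Sum>s\<in>F. lam' s * s) = Max ((\<lambda>s. qnorm K v (lam' s * s)) ` F)"
      using le ge by linarith
  qed
qed

end

theorem mainTheorem4:
  fixes K :: "'L::field set" and v :: "'L \<Rightarrow> real" and p :: nat and m :: nat
  assumes "nonarch_abs v"
    and "is_subfield K"
    and "v_complete K v"
    and "nontrivially_valued K v"
    and "\<not> spherically_complete K v"
    and "spherically_complete (UNIV :: 'L set) v"
    and "immediate_ext K v"
    and "alg_closed_sub K"
    and "\<forall>n::nat. n > 0 \<longrightarrow> (of_nat n :: 'L) \<noteq> 0"
    and "prime p" and "v (of_nat p) < 1"
  shows "\<exists>x :: nat \<Rightarrow> 'L. inj_on x {..<m} \<and> orthogonal_mod K v (x ` {..<m})"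
proof -
  interpret qn v K using assms(1,2) by unfold_locales
  obtain z0 where z0: "z0 \<notin> K"
  proof -
    have "K \<noteq> UNIV" using assms(5,6) by auto
    then show ?thesis using that by auto
  qed
  define r where "r = qnorm K v z0"
  have r0: "0 \<le> r" unfolding r_def by (rule qnorm_nonneg)
  have rpos: "0 < r"
  proof (rule ccontr)
    assume "\<not> 0 < r"
    hence r00: "r = 0" using r0 by simp
    have "\<forall>n. \<exists>a. a \<in> K \<and> v (z0 - a) < inverse (real (Suc n))"
    proof
      fix n
      have "qnorm K v z0 < inverse (real (Suc n))" using r00 unfolding r_def by simp
      then show "\<exists>a. a \<in> K \<and> v (z0 - a) < inverse (real (Suc n))" using qnorm_lessD by blast
    qed
    then obtain f where f: "\<And>n. f n \<in> K" "\<And>n. v (z0 - f n) < inverse (real (Suc n))"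
      by metis
    have cauchy: "\<forall>e>0. \<exists>N. \<forall>m\<ge>N. \<forall>n\<ge>N. v (f m - f n) < e"
    proof (intro allI impI)
      fix e :: real assume e: "0 < e"
      obtain n0 :: nat where n0: "0 < n0" "inverse (real n0) < e" using ex_inverse_of_nat_less[OF e] by auto
      define N where "N = n0 - 1"
      have N: "inverse (real (Suc N)) < e" using n0 unfolding N_def by simp
      have "v (f m - f n) < e" if "m \<ge> N" "n \<ge> N" for m n
      proof -
        have im: "inverse (real (Suc m)) \<le> inverse (real (Suc N))" using that by (intro le_imp_inverse_le) auto
        have inn: "inverse (real (Suc n)) \<le> inverse (real (Suc N))" using that by (intro le_imp_inverse_le) auto
        have "f m - f n = (- (z0 - f m)) + (z0 - f n)" by simp
        hence "v (f m - f n) \<le> max (v (z0 - f m)) (v (z0 - f n))" using v_add[of "- (z0 - f m)" "z0 - f n"] by (simp add: v_diff_comm[of "f m" z0])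
        then show ?thesis using f(2)[of m] f(2)[of n] im inn N by linarith
      qed
      then show "\<exists>N. \<forall>m\<ge>N. \<forall>n\<ge>N. v (f m - f n) < e" by blast
    qed
    obtain a where a: "a \<in> K" "(\<lambda>n. v (f n - a)) \<longlonglongrightarrow> 0"
      using assms(3) f(1) cauchy unfolding v_complete_def by blast
    have lim: "(\<lambda>n. inverse (real (Suc n)) + v (f n - a)) \<longlonglongrightarrow> 0 + 0"
      by (intro tendsto_intros LIMSEQ_inverse_real_of_nat a(2))
    have "v (z0 - a) \<le> inverse (real (Suc n)) + v (f n - a)" for n
    proof -
      have "v (z0 - a) \<le> max (v (z0 - f n)) (v (f n - a))" using v_add[of "z0 - f n" "f n - a"] by simp
      then show ?thesis using f(2)[of n] v_nonneg[of "f n - a"] v_nonneg[of "z0 - f n"] by linarith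
    qed
    hence "v (z0 - a) \<le> 0 + 0" by (intro LIMSEQ_le_const[OF lim]) auto
    hence "z0 = a" using v_nonneg[of "z0 - a"] by simp
    then show False using z0 a by simp
  qed
  have strict0: "r < v (z0 - a)" if a: "a \<in> K" for a
  proof (rule ccontr)
    assume "\<not> r < v (z0 - a)"
    hence wr: "v (z0 - a) = r" using qnorm_le[OF a, of z0] unfolding r_def by simp
    define w where "w = z0 - a"
    have wnz: "w \<noteq> 0" using wr rpos unfolding w_def by auto
    have "v w \<in> v ` (K - {0})" using assms(7) wnz unfolding immediate_ext_def by blast
    then obtain c where c: "c \<in> K - {0}" "v c = v w" by (metis imageE)
    hence c: "c \<in> K" "c \<noteq> 0" "v c = v w" by auto
    have "v (w / c) \<le> 1" using c wnz by simp
    then obtain e where e: "e \<in> K" "v (w / c - e) < 1" using assms(7) unfolding immediate_ext_def by blast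
    have "w - c * e = c * (w / c - e)" using c(2) by (simp add: algebra_simps)
    hence "v (w - c * e) = v c * v (w / c - e)" by simp
    also have "\<dots> < v c * 1" using e c by (intro mult_strict_left_mono) auto
    finally have lt: "v (z0 - (a + c * e)) < r" using c wr wnz unfolding w_def by (simp add: algebra_simps)
    have "r \<le> v (z0 - (a + c * e))" unfolding r_def using a c e by (intro qnorm_le) auto
    then show False using lt by simp
  qed
  define N where "N = p ^ m"
  have Npos: "0 < N" unfolding N_def using assms(10) prime_gt_0_nat by simp
  define vp where "vp = v (of_nat p)"
  have vp: "0 < vp" "vp < 1" unfolding vp_def using assms(9,10,11) prime_gt_0_nat by auto
  define t where "t = root N (2 / (1 + vp))"
  have t1: "1 < t" unfolding t_def using Npos vp by simp
  have tN: "t ^ N = 2 / (1 + vp)" unfolding t_def using Npos vp by simp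
  have "vp * t ^ N = 2 * vp / (1 + vp)" using tN by simp
  also have "\<dots> < 1" using vp by (simp add: divide_less_eq)
  finally have pt: "v (of_nat p) * t ^ (p ^ m) < 1" unfolding N_def vp_def .
  obtain a0 where a0: "a0 \<in> K" "v (z0 - a0) < r * t"
    using qnorm_lessD[of z0 "r * t"] rpos t1 unfolding r_def by auto
  define z where "z = z0 - a0"
  interpret mainsetup v K z r t p m
  proof unfold_locales
    show "alg_closed_sub K" by fact
    show "r < v (z - a)" if "a \<in> K" for a
      using strict0[of "a0 + a"] that a0 unfolding z_def by (simp add: algebra_simps)
    show "\<exists>a\<in>K. v (z - a) < e" if re: "r < e" for e
    proof -
      obtain a where "a \<in> K" "v (z0 - a) < e" using qnorm_lessD[of z0 e] re unfolding r_def by auto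
      then show ?thesis using a0 unfolding z_def by (intro bexI[of _ "a - a0"]) (auto simp: algebra_simps)
    qed
    show "0 < r" by fact
    show "1 < t" by fact
    show "v z < r * t" using a0(2) unfolding z_def .
    show "prime p" by fact
    show "v (of_nat p) * t ^ (p ^ m) < 1" by fact
  qed
  show ?thesis by (rule ortho)
qed

end
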